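(* Let $T$ be a tournament, let $v$ be a vertex with $d^-(v)=0$, and let $M\subseteq V(T)$. Then $T$ is $M$-sparse if and only if $T-v$ is $(M\setminus\{v\})$-sparse.
   Context: A tournament is a digraph with exactly one arc between each pair of distinct vertices; $d^-(v)$ is the in-degree of $v$ and $T-v$ is the subtournament induced by $V(T)\setminus\{v\}$. For an ordering $\sigma$ of the vertices, an arc $(x,y)$ is backward if $y$ precedes $x$, and $d_\sigma(u)$ is the number of backward arcs incident to $u$. For a tournament $S$ and $N\subseteq V(S)$, $S$ is $N$-sparse if there is an ordering $\sigma$ of $V(S)$ with $d_\sigma(u)\le1$ for all $u$ and $d_\sigma(u)=0$ for all $u\in N$. *)

theory Defs
  imports Main
begin

definition tournament :: "'a set \<Rightarrow> ('a \<times> 'a) set \<Rightarrow> bool" where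
  "tournament V A \<longleftrightarrow> finite V \<and> A \<subseteq> V \<times> V \<and> (\<forall>x. (x, x) \<notin> A) \<and>
     (\<forall>x\<in>V. \<forall>y\<in>V. x \<noteq> y \<longrightarrow> ((x, y) \<in> A \<longleftrightarrow> (y, x) \<notin> A))"

definition in_degree :: "('a \<times> 'a) set \<Rightarrow> 'a \<Rightarrow> nat" where
  "in_degree A v = card {u. (u, v) \<in> A}"

definition del_vertex_arcs :: "'a set \<Rightarrow> ('a \<times> 'a) set \<Rightarrow> 'a \<Rightarrow> ('a \<times> 'a) set" where
  "del_vertex_arcs V A v = A \<inter> ((V - {v}) \<times> (V - {v}))"

definition is_ordering :: "'a set \<Rightarrow> 'a list \<Rightarrow> bool" where
  "is_ordering V \<sigma> \<longleftrightarrow> distinct \<sigma> \<and> set \<sigma> = V"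

definition precedes :: "'a list \<Rightarrow> 'a \<Rightarrow> 'a \<Rightarrow> bool" where
  "precedes \<sigma> y x \<longleftrightarrow> (\<exists>i j. i < j \<and> j < length \<sigma> \<and> \<sigma> ! i = y \<and> \<sigma> ! j = x)"

definition backward_arcs :: "('a \<times> 'a) set \<Rightarrow> 'a list \<Rightarrow> ('a \<times> 'a) set" where
  "backward_arcs A \<sigma> = {(x, y). (x, y) \<in> A \<and> precedes \<sigma> y x}"

definition back_deg :: "('a \<times> 'a) set \<Rightarrow> 'a list \<Rightarrow> 'a \<Rightarrow> nat" where
  "back_deg A \<sigma> u = card {e \<in> backward_arcs A \<sigma>. fst e = u \<or> snd e = u}"

definition sparse :: "'a set \<Rightarrow> ('a \<times> 'a) set \<Rightarrow> 'a set \<Rightarrow> bool" where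
  "sparse V A N \<longleftrightarrow> (\<exists>\<sigma>. is_ordering V \<sigma> \<and> (\<forall>u\<in>V. back_deg A \<sigma> u \<le> 1) \<and>
                            (\<forall>u\<in>N. back_deg A \<sigma> u = 0))"

end

theory Submission
  imports Defs
begin

lemma precedes_Nil: "\<not> precedes [] y x"
  by (simp add: precedes_def)

lemma precedes_mem: "precedes s y x \<Longrightarrow> x \<in> set s \<and> y \<in> set s"
  unfolding precedes_def by auto

lemma precedes_Cons:
  "precedes (a # s) y x \<longleftrightarrow> (a = y \<and> x \<in> set s) \<or> precedes s y x"
proof
  assume "precedes (a # s) y x"
  then obtain i j where h: "i < j" "j < length (a#s)" "(a#s) ! i = y" "(a#s) ! j = x"
    unfolding precedes_def by blast
  show "(a = y \<and> x \<in> set s) \<or> precedes s y x"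
  proof (cases i)
    case 0
    then obtain j' where "j = Suc j'" using h by (cases j) auto
    then show ?thesis using h 0 by auto
  next
    case (Suc i')
    then obtain j' where j: "j = Suc j'" using h by (cases j) auto
    then have "i' < j'" "j' < length s" "s ! i' = y" "s ! j' = x" using h Suc by auto
    then show ?thesis unfolding precedes_def by blast
  qed
next
  assume "(a = y \<and> x \<in> set s) \<or> precedes s y x"
  then show "precedes (a # s) y x"
  proof
    assume "a = y \<and> x \<in> set s"
    then obtain j where "j < length s" "s ! j = x" by (auto simp: in_set_conv_nth)
    then have "0 < Suc j" "Suc j < length (a#s)" "(a#s) ! 0 = y" "(a#s) ! Suc j = x"
      using \<open>a = y \<and> x \<in> set s\<close> by auto
    then show ?thesis unfolding precedes_def by blast
  next
    assume "precedes s y x"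
    then obtain i j where h: "i < j" "j < length s" "s ! i = y" "s ! j = x"
      unfolding precedes_def by blast
    then have "Suc i < Suc j" "Suc j < length (a#s)" "(a#s) ! Suc i = y" "(a#s) ! Suc j = x"
      by auto
    then show ?thesis unfolding precedes_def by blast
  qed
qed

lemma precedes_filter:
  "precedes (filter P s) y x \<longleftrightarrow> P y \<and> P x \<and> precedes s y x"
  by (induction s) (auto simp: precedes_Nil precedes_Cons)

theorem mainTheorem14:
  fixes V :: "'a set" and A :: "('a \<times> 'a) set" and v :: 'a and M :: "'a set"
  assumes "tournament V A" and "v \<in> V" and "in_degree A v = 0" and "M \<subseteq> V"
  shows "sparse V A M \<longleftrightarrow> sparse (V - {v}) (del_vertex_arcs V A v) (M - {v})"
proof -
  have finV: "finite V" and AV: "A \<subseteq> V \<times> V" using assms(1) unfolding tournament_def by auto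
  have finA: "finite A" using finV AV finite_subset by blast
  have "{u. (u, v) \<in> A} \<subseteq> fst ` A" by force
  then have "finite {u. (u, v) \<in> A}" using finA finite_subset by blast
  then have noin: "\<And>u. (u, v) \<notin> A" using assms(3) unfolding in_degree_def by auto
  let ?A' = "del_vertex_arcs V A v"
  have A'A: "?A' \<subseteq> A" unfolding del_vertex_arcs_def by auto
  show ?thesis
  proof
    assume "sparse V A M"
    then obtain s where s: "is_ordering V s" "\<forall>u\<in>V. back_deg A s u \<le> 1"
      "\<forall>u\<in>M. back_deg A s u = 0" unfolding sparse_def by blast
    let ?s = "filter (\<lambda>x. x \<noteq> v) s"
    have ord: "is_ordering (V - {v}) ?s" using s(1) unfolding is_ordering_def by auto
    have sub: "backward_arcs ?A' ?s \<subseteq> backward_arcs A s"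
      unfolding backward_arcs_def using A'A by (auto simp: precedes_filter)
    have finB: "finite (backward_arcs A s)"
      using finA unfolding backward_arcs_def by (rule rev_finite_subset) auto
    have le: "back_deg ?A' ?s u \<le> back_deg A s u" for u
      unfolding back_deg_def
      by (rule card_mono) (use finB sub in auto)
    show "sparse (V - {v}) ?A' (M - {v})"
      unfolding sparse_def
    proof (rule exI[of _ ?s], intro conjI ballI)
      show "is_ordering (V - {v}) ?s" by (rule ord)
    next
      fix u assume "u \<in> V - {v}"
      then show "back_deg ?A' ?s u \<le> 1" using s(2) le[of u] by auto
    next
      fix u assume "u \<in> M - {v}"
      then show "back_deg ?A' ?s u = 0" using s(3) le[of u] by auto
    qed
  next
    assume "sparse (V - {v}) ?A' (M - {v})"
    then obtain s where s: "is_ordering (V - {v}) s" "\<forall>u\<in>V - {v}. back_deg ?A' s u \<le> 1"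
      "\<forall>u\<in>M - {v}. back_deg ?A' s u = 0" unfolding sparse_def by blast
    have ord: "is_ordering V (v # s)" using s(1) assms(2) unfolding is_ordering_def by auto
    have eq: "backward_arcs A (v # s) = backward_arcs ?A' s"
    proof -
      have "backward_arcs A (v # s) \<subseteq> backward_arcs ?A' s"
      proof
        fix e assume "e \<in> backward_arcs A (v # s)"
        then obtain x y where e: "e = (x, y)" "(x, y) \<in> A" "precedes (v # s) y x"
          unfolding backward_arcs_def by blast
        then have p: "precedes s y x" using noin by (auto simp: precedes_Cons)
        have "set s = V - {v}" using s(1) unfolding is_ordering_def by simp
        then have "x \<in> V - {v}" "y \<in> V - {v}" using precedes_mem[OF p] by simp_all
        then show "e \<in> backward_arcs ?A' s" using e p
          unfolding backward_arcs_def del_vertex_arcs_def by auto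
      qed
      moreover have "backward_arcs ?A' s \<subseteq> backward_arcs A (v # s)"
        unfolding backward_arcs_def using A'A by (auto simp: precedes_Cons)
      ultimately show ?thesis by blast
    qed
    have bd: "back_deg A (v # s) u = back_deg ?A' s u" for u
      unfolding back_deg_def eq ..
    have v0: "back_deg ?A' s v = 0"
    proof -
      have "{e \<in> backward_arcs ?A' s. fst e = v \<or> snd e = v} = {}"
        unfolding backward_arcs_def del_vertex_arcs_def by auto
      then show ?thesis unfolding back_deg_def by (metis card.empty)
    qed
    show "sparse V A M"
      unfolding sparse_def
    proof (rule exI[of _ "v # s"], intro conjI ballI)
      show "is_ordering V (v # s)" by (rule ord)
    next
      fix u assume "u \<in> V"
      then show "back_deg A (v # s) u \<le> 1" using s(2) v0 bd by (cases "u = v") auto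
    next
      fix u assume "u \<in> M"
      then show "back_deg A (v # s) u = 0" using s(3) v0 bd by (cases "u = v") auto
    qed
  qed
qed

end
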